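(* Let $\vec r\in\mathbb Z^n$. For every $\sigma\in H_{\vec r}$ and $\tau,\rho\in S_n$, $$\vartheta_{\vec r}(\sigma\tau,\rho)=\vartheta_{\vec r}(\sigma,\tau\rho)\,\vartheta_{\vec r}(\tau,\rho).$$
   Context: $n\ge2$, $\theta\in M_n(\mathbb R)$ skew-symmetric, $\omega_{ij}=e^{2\pi i\theta_{ij}}$. $S_n$ acts on $\mathbb Z^n$ by $\sigma\vec r=(r_{\sigma^{-1}(1)},\dots,r_{\sigma^{-1}(n)})$; $H_{\vec r}=\{\sigma\in S_n:\sigma\vec r=\vec r\}$. For $\sigma,\tau\in S_n$: $\vartheta_{\vec r}(\sigma,\tau)=\prod_{i<j,\ \sigma(i)>\sigma(j)}(\omega_{\tau^{-1}(j),\tau^{-1}(i)})^{r_{\sigma(i)}r_{\sigma(j)}}$. *)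

theory Defs
  imports "HOL-Analysis.Analysis" "HOL-Combinatorics.Permutations"
begin

text \<open>Vectors in Z^n are functions nat => int (only values on {1..n} matter);
  theta is a real matrix given as a function nat => nat => real.\<close>

definition omega :: "(nat \<Rightarrow> nat \<Rightarrow> real) \<Rightarrow> nat \<Rightarrow> nat \<Rightarrow> complex" where
  "omega \<theta> i j = exp (2 * of_real pi * \<i> * of_real (\<theta> i j))"

definition perm_act :: "(nat \<Rightarrow> nat) \<Rightarrow> (nat \<Rightarrow> int) \<Rightarrow> (nat \<Rightarrow> int)" where
  "perm_act \<sigma> r = (\<lambda>k. r (inv \<sigma> k))"

definition stabilizer :: "nat \<Rightarrow> (nat \<Rightarrow> int) \<Rightarrow> (nat \<Rightarrow> nat) set" where
  "stabilizer n r = {\<sigma>. \<sigma> permutes {1..n} \<and> (\<forall>k\<in>{1..n}. perm_act \<sigma> r k = r k)}"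

definition vartheta ::
  "nat \<Rightarrow> (nat \<Rightarrow> nat \<Rightarrow> real) \<Rightarrow> (nat \<Rightarrow> int) \<Rightarrow> (nat \<Rightarrow> nat) \<Rightarrow> (nat \<Rightarrow> nat) \<Rightarrow> complex" where
  "vartheta n \<theta> r \<sigma> \<tau> =
     (\<Prod>(i, j)\<in>{(i, j). i \<in> {1..n} \<and> j \<in> {1..n} \<and> i < j \<and> \<sigma> i > \<sigma> j}.
        (omega \<theta> (inv \<tau> j) (inv \<tau> i)) powi (r (\<sigma> i) * r (\<sigma> j)))"

end

theory Submission
  imports Defs
begin

lemma vt_alt:
  "vartheta n \<theta> r s t = (\<Prod>x\<in>{(i,j). i\<in>{1..n} \<and> j\<in>{1..n} \<and> i<j}.
     if s (fst x) > s (snd x) then omega \<theta> (inv t (snd x)) (inv t (fst x)) powi (r (s (fst x)) * r (s (snd x))) else 1)"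
proof -
  let ?L = "{(i,j). i\<in>{1..n} \<and> j\<in>{1..n} \<and> i<j}"
  have fin: "finite ?L"
    by (rule finite_subset[of _ "{1..n}\<times>{1..n}"]) auto
  have eq: "{(i, j). i \<in> {1..n} \<and> j \<in> {1..n} \<and> i < j \<and> s i > s j} = {x\<in>?L. s (fst x) > s (snd x)}"
    by auto
  show ?thesis
    unfolding vartheta_def eq prod.inter_filter[OF fin]
    by (rule prod.cong) (auto split: prod.splits)
qed

lemma omega_anti:
  assumes "\<forall>i\<in>{1..n}. \<forall>j\<in>{1..n}. \<theta> i j = - \<theta> j i" "a \<in> {1..n}" "b \<in> {1..n}"
  shows "omega \<theta> a b * omega \<theta> b a = 1"
proof -
  have "\<theta> a b = - \<theta> b a" using assms by blast
  hence th0: "\<theta> a b + \<theta> b a = 0" by simp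
  have e1: "omega \<theta> a b * omega \<theta> b a = exp (2 * of_real pi * \<i> * of_real (\<theta> a b + \<theta> b a))"
    unfolding omega_def by (simp add: exp_add[symmetric] algebra_simps)
  have e2: "exp (2 * of_real pi * \<i> * of_real (\<theta> a b + \<theta> b a)) = 1"
  proof -
    have z: "complex_of_real (\<theta> a b + \<theta> b a) = 0" using \<open>\<theta> a b + \<theta> b a = 0\<close> by (metis of_real_0)
    show ?thesis by (simp only: z mult_zero_right exp_zero)
  qed
  show ?thesis using e1 e2 by (rule trans)
qed

theorem lemma4p10:
  fixes n :: nat and \<theta> :: "nat \<Rightarrow> nat \<Rightarrow> real" and r :: "nat \<Rightarrow> int"
    and \<sigma> \<tau> \<rho> :: "nat \<Rightarrow> nat"
  assumes "n \<ge> 2"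
    and anti: "\<forall>i\<in>{1..n}. \<forall>j\<in>{1..n}. \<theta> i j = - \<theta> j i"
    and st: "\<sigma> \<in> stabilizer n r"
    and tp: "\<tau> permutes {1..n}" and rp: "\<rho> permutes {1..n}"
  shows "vartheta n \<theta> r (\<sigma> \<circ> \<tau>) \<rho> = vartheta n \<theta> r \<sigma> (\<tau> \<circ> \<rho>) * vartheta n \<theta> r \<tau> \<rho>"
proof -
  define L where "L = {(i,j). i\<in>{1..n} \<and> j\<in>{1..n} \<and> (i::nat)<j}"
  define h where "h = (\<lambda>a b. omega \<theta> (inv \<rho> b) (inv \<rho> a) powi (r (\<tau> a) * r (\<tau> b)))"
  have sp: "\<sigma> permutes {1..n}" using st unfolding stabilizer_def by auto
  have rs: "r (\<sigma> k) = r k" if "k \<in> {1..n}" for k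
  proof -
    have "\<sigma> k \<in> {1..n}" using permutes_in_image[OF sp] that by auto
    hence "r (inv \<sigma> (\<sigma> k)) = r (\<sigma> k)" using st unfolding stabilizer_def perm_act_def by auto
    thus ?thesis using permutes_inverses(2)[OF sp] by simp
  qed
  have tin: "\<tau> k \<in> {1..n} \<longleftrightarrow> k \<in> {1..n}" for k using permutes_in_image[OF tp] .
  have rst: "r (\<sigma> (\<tau> k)) = r (\<tau> k)" if "k \<in> {1..n}" for k using rs tin that by blast
  have itin: "inv \<tau> k \<in> {1..n} \<longleftrightarrow> k \<in> {1..n}" for k using permutes_in_image[OF permutes_inv[OF tp]] .
  have irin: "inv \<rho> k \<in> {1..n} \<longleftrightarrow> k \<in> {1..n}" for k using permutes_in_image[OF permutes_inv[OF rp]] .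
  have tinj: "\<tau> a = \<tau> b \<longleftrightarrow> a = b" for a b using permutes_inj[OF tp] by (auto dest: injD)
  have sinj: "\<sigma> a = \<sigma> b \<longleftrightarrow> a = b" for a b using permutes_inj[OF sp] by (auto dest: injD)
  have hh: "h a b * h b a = 1" if "a \<in> {1..n}" "b \<in> {1..n}" for a b
  proof -
    have "h a b * h b a = (omega \<theta> (inv \<rho> b) (inv \<rho> a) * omega \<theta> (inv \<rho> a) (inv \<rho> b)) powi (r (\<tau> a) * r (\<tau> b))"
      unfolding h_def by (simp add: power_int_mult_distrib mult.commute)
    also have "\<dots> = 1" using omega_anti[OF anti] irin that by simp
    finally show ?thesis .
  qed
  have LHS: "vartheta n \<theta> r (\<sigma> \<circ> \<tau>) \<rho> = (\<Prod>x\<in>L. if \<sigma> (\<tau> (fst x)) > \<sigma> (\<tau> (snd x)) then h (fst x) (snd x) else 1)"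
    unfolding vt_alt L_def[symmetric]
    by (rule prod.cong) (auto simp: L_def h_def rst)
  have R2: "vartheta n \<theta> r \<tau> \<rho> = (\<Prod>x\<in>L. if \<tau> (fst x) > \<tau> (snd x) then h (fst x) (snd x) else 1)"
    unfolding vt_alt L_def[symmetric] h_def by simp
  define G where "G = (\<lambda>x. if \<sigma> (fst x) > \<sigma> (snd x) then h (inv \<tau> (fst x)) (inv \<tau> (snd x)) else 1)"
  have R1a: "vartheta n \<theta> r \<sigma> (\<tau> \<circ> \<rho>) = (\<Prod>x\<in>L. G x)"
  proof -
    have ic: "inv (\<tau> \<circ> \<rho>) = inv \<rho> \<circ> inv \<tau>"
      by (rule o_inv_distrib[OF permutes_bij[OF tp] permutes_bij[OF rp]])
    show ?thesis
      unfolding vt_alt L_def[symmetric] ic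
      by (rule prod.cong) (auto simp: L_def G_def h_def rs permutes_inverses(1)[OF tp])
  qed
  define \<phi> where "\<phi> = (\<lambda>(a,b). if \<tau> a < \<tau> b then (\<tau> a, \<tau> b) else (\<tau> b, \<tau> a))"
  define \<psi> where "\<psi> = (\<lambda>(a,b). if inv \<tau> a < inv \<tau> b then (inv \<tau> a, inv \<tau> b) else (inv \<tau> b, inv \<tau> a))"
  have ti1: "inv \<tau> (\<tau> x) = x" for x using permutes_inverses(2)[OF tp] .
  have ti2: "\<tau> (inv \<tau> x) = x" for x using permutes_inverses(1)[OF tp] .
  have bij: "bij_betw \<phi> L L"
  proof (rule bij_betw_byWitness[where f'=\<psi> and f=\<phi> and A=L and A'=L])
    show "\<forall>a\<in>L. \<psi> (\<phi> a) = a"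
      by (auto simp: L_def \<phi>_def \<psi>_def ti1 tinj)
    show "\<forall>a\<in>L. \<phi> (\<psi> a) = a"
      by (auto simp: L_def \<phi>_def \<psi>_def ti2 itin)
    show "\<phi> ` L \<subseteq> L"
    proof
      fix y assume "y \<in> \<phi> ` L"
      then obtain a b where ab: "(a,b)\<in>L" "y = \<phi> (a,b)" by auto
      then have "a\<in>{1..n}" "b\<in>{1..n}" "a<b" by (auto simp: L_def)
      hence "\<tau> a \<in> {1..n}" "\<tau> b \<in> {1..n}" "\<tau> a \<noteq> \<tau> b" using tin tinj by auto
      thus "y \<in> L" using ab(2) by (auto simp: L_def \<phi>_def)
    qed
    show "\<psi> ` L \<subseteq> L"
    proof
      fix y assume "y \<in> \<psi> ` L"
      then obtain a b where ab: "(a,b)\<in>L" "y = \<psi> (a,b)" by auto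
      then have "a\<in>{1..n}" "b\<in>{1..n}" "a<b" by (auto simp: L_def)
      moreover have "inv \<tau> a \<noteq> inv \<tau> b" using \<open>a<b\<close> ti2 by (metis less_irrefl)
      ultimately have "inv \<tau> a \<in> {1..n}" "inv \<tau> b \<in> {1..n}" "inv \<tau> a \<noteq> inv \<tau> b" using itin by auto
      thus "y \<in> L" using ab(2) by (auto simp: L_def \<psi>_def)
    qed
  qed
  have R1: "vartheta n \<theta> r \<sigma> (\<tau> \<circ> \<rho>) = (\<Prod>x\<in>L. G (\<phi> x))"
    unfolding R1a by (rule prod.reindex_bij_betw[OF bij, symmetric])
  show ?thesis
    unfolding LHS R1 R2 prod.distrib[symmetric]
  proof (rule prod.cong[OF refl])
    fix x assume "x \<in> L"
    then obtain a b where x: "x = (a,b)" "a \<in> {1..n}" "b \<in> {1..n}" "a < b" by (auto simp: L_def)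
    have ne: "\<tau> a \<noteq> \<tau> b" "\<sigma> (\<tau> a) \<noteq> \<sigma> (\<tau> b)" using x tinj sinj by auto
    show "(if \<sigma> (\<tau> (fst x)) > \<sigma> (\<tau> (snd x)) then h (fst x) (snd x) else 1) =
          G (\<phi> x) * (if \<tau> (fst x) > \<tau> (snd x) then h (fst x) (snd x) else 1)"
      using ne hh[OF x(2,3)] hh[OF x(3,2)] unfolding x(1)
      by (auto simp: G_def \<phi>_def ti1 mult.commute)
  qed
qed

end
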